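(* Let $p$ be a prime, $q=p^l$, $m\ge1$, $n=2m$, $N=q^n-1$. Let $r=\rho(q-1)+1$ with $0\leqslant\rho\leqslant n-1$, and let $I\subseteq M_r$ satisfy $\{q,\,q-2,\,|q-4|\}\cap I=\emptyset$ if $\rho$ is odd and $\{1,3\}\cap I=\emptyset$ if $\rho$ is even. Let $\delta=q^{n-\rho}-1$ and $\mathcal{I}_{n-\rho}=\{q^{n-\rho}-q^j\mid 0\le j\le n-\rho-1\}$. Let $x=(x_g)_{g\in\mathbb{F}_{q^n}^*}$ be a codeword of $\mathcal{C}_q(r,I,n)^*$ of Hamming weight $\delta$, let $\Lambda_s=\sum_{g\in\mathbb{F}_{q^n}^*}x_g g^{s}$ for integers $s\ge0$, and let $\sigma(X)=\prod_{g:\,x_g\neq0}(1-gX)=1+\sum_{j=1}^{\delta}\sigma_jX^j$ be the locator polynomial of $x$. Then: (i) $\Lambda_1=\Lambda_2=\cdots=\Lambda_{\delta-1}=0$; (ii) for $u\in[1,\delta-1]$: if $u\notin\mathcal{I}_{n-\rho}$ then $\Lambda_{\delta+u}=0$ and $\sigma_u=0$; if $u\in\mathcal{I}_{n-\rho}$ then $\sigma_u=-\Lambda_{\delta+u}/\Lambda_\delta$ (in particular $\Lambda_\delta\ne0$); (iii) $\sigma(X)=1-\sum_{u\in\mathcal{I}_{n-\rho}}\frac{\Lambda_{\delta+u}}{\Lambda_\delta}X^u$.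
   Context: Let $\alpha$ be a primitive element of $\mathbb{F}_{q^n}$. Every integer $0\le u\le q^n-1$ is written $u=\sum_{i=0}^{n-1}u_iq^i$, $u_i\in\{0,\dots,q-1\}$; $\mathrm{wt}_q(u)=\sum u_i$, $O(u)=\sum_{i\text{ odd}}u_i$, $E(u)=\sum_{i\text{ even}}u_i$. For $-1\le r<n(q-1)$, $Z_r=\{\alpha^u\mid 0<u\le q^n-1,\ \mathrm{wt}_q(u)\le n(q-1)-r-1\}$. For $0\le r\le n(q-1)$ and integer $k\ge0$, $\Theta^{(r)}_k=\{\alpha^u\mid 0\le u\le q^n-1,\ \mathrm{wt}_q(u)=n(q-1)-r,\ |O(u)-E(u)|=k\}$. $M_r$ is the set of even (resp. odd) integers $k\in[0,m(q-1)]$ when $r$ is even (resp. odd). For $I\subseteq M_r$: $\overline I=M_r\setminus I$, $Z_{r,I}=Z_r\cup\bigcup_{k\in\overline I}\Theta^{(r)}_k$. $\mathcal{C}_q(r,I,n)^*$ is the cyclic code of length $N$ over $\mathbb{F}_q$ with coordinates indexed by $\mathbb{F}_{q^n}^*$ (coordinate $i$ labelled $\alpha^i$) consisting of all $x=(x_g)$ with $\sum_g x_g g^{u}=0$ for every $u\in[1,N]$ with $\alpha^u\in Z_{r,I}$. *)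

theory Defs
  imports "HOL-Computational_Algebra.Polynomial"
begin

definition qdigit :: "nat \<Rightarrow> nat \<Rightarrow> nat \<Rightarrow> nat" where
  "qdigit q i u = (u div q ^ i) mod q"

definition wt_q :: "nat \<Rightarrow> nat \<Rightarrow> nat \<Rightarrow> nat" where
  "wt_q q n u = (\<Sum>i<n. qdigit q i u)"

definition O_q :: "nat \<Rightarrow> nat \<Rightarrow> nat \<Rightarrow> nat" where
  "O_q q n u = (\<Sum>i\<in>{i. i < n \<and> odd i}. qdigit q i u)"

definition E_q :: "nat \<Rightarrow> nat \<Rightarrow> nat \<Rightarrow> nat" where
  "E_q q n u = (\<Sum>i\<in>{i. i < n \<and> even i}. qdigit q i u)"

definition primitive_elem :: "'a::{finite,field} \<Rightarrow> bool" where
  "primitive_elem \<alpha> \<longleftrightarrow> \<alpha> \<noteq> 0 \<and>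
     (\<forall>k. 0 < k \<and> k < card (UNIV :: 'a set) - 1 \<longrightarrow> \<alpha> ^ k \<noteq> 1)"

definition Z_set :: "'a::field \<Rightarrow> nat \<Rightarrow> nat \<Rightarrow> nat \<Rightarrow> 'a set" where
  "Z_set \<alpha> q n r = {\<alpha> ^ u | u. 0 < u \<and> u \<le> q ^ n - 1 \<and>
      int (wt_q q n u) \<le> int n * (int q - 1) - int r - 1}"

definition Theta_set :: "'a::field \<Rightarrow> nat \<Rightarrow> nat \<Rightarrow> nat \<Rightarrow> nat \<Rightarrow> 'a set" where
  "Theta_set \<alpha> q n r k = {\<alpha> ^ u | u. u \<le> q ^ n - 1 \<and>
      int (wt_q q n u) = int n * (int q - 1) - int r \<and>
      \<bar>int (O_q q n u) - int (E_q q n u)\<bar> = int k}"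

definition M_set :: "nat \<Rightarrow> nat \<Rightarrow> nat \<Rightarrow> nat set" where
  "M_set q m r = {k. k \<le> m * (q - 1) \<and> (even k \<longleftrightarrow> even r)}"

definition Z_rI :: "'a::field \<Rightarrow> nat \<Rightarrow> nat \<Rightarrow> nat \<Rightarrow> nat \<Rightarrow> nat set \<Rightarrow> 'a set" where
  "Z_rI \<alpha> q n m r I = Z_set \<alpha> q n r \<union> (\<Union>k\<in>M_set q m r - I. Theta_set \<alpha> q n r k)"

text \<open>Codewords of C_q(r,I,n)^*: words x indexed by nonzero field elements
  (x 0 = 0 by convention), entries in the subfield F_q = {y. y^q = y}.\<close>

definition in_code :: "'a::{finite,field} \<Rightarrow> nat \<Rightarrow> nat \<Rightarrow> nat \<Rightarrow> nat \<Rightarrow> nat set \<Rightarrow> ('a \<Rightarrow> 'a) \<Rightarrow> bool" where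
  "in_code \<alpha> q n m r I x \<longleftrightarrow>
     x 0 = 0 \<and> (\<forall>g. x g ^ q = x g) \<and>
     (\<forall>u\<in>{1..q ^ n - 1}. \<alpha> ^ u \<in> Z_rI \<alpha> q n m r I \<longrightarrow>
        (\<Sum>g\<in>UNIV - {0}. x g * g ^ u) = 0)"

definition hamming_wt :: "('a::{finite,zero} \<Rightarrow> 'a) \<Rightarrow> nat" where
  "hamming_wt x = card {g. g \<noteq> 0 \<and> x g \<noteq> 0}"

definition Lambda :: "('a::{finite,field} \<Rightarrow> 'a) \<Rightarrow> nat \<Rightarrow> 'a" where
  "Lambda x s = (\<Sum>g\<in>UNIV - {0}. x g * g ^ s)"

definition locator :: "('a::{finite,field} \<Rightarrow> 'a) \<Rightarrow> 'a poly" where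
  "locator x = (\<Prod>g\<in>{g. g \<noteq> 0 \<and> x g \<noteq> 0}. [:1, - g:])"

definition I_set :: "nat \<Rightarrow> nat \<Rightarrow> nat set" where
  "I_set q t = {q ^ t - q ^ j | j. j < t}"

end

theory Submission
  imports Defs
begin


lemma qdigit_Suc: "qdigit q (Suc i) v = qdigit q i (v div q)"
  unfolding qdigit_def by (simp add: div_mult2_eq)

lemma qdigit_0: "qdigit q 0 v = v mod q"
  unfolding qdigit_def by simp

lemma qdigit_sum:
  assumes "q > 0" "\<forall>i<t. e i < q"
  shows "qdigit q i (\<Sum>k<t. e k * q ^ k) = (if i < t then e i else 0)"
  using assms(2)
proof (induction t arbitrary: e i)
  case 0
  then show ?case by (simp add: qdigit_def)
next
  case (Suc t)
  have eq: "(\<Sum>k<Suc t. e k * q ^ k) = e 0 + q * (\<Sum>k<t. e (Suc k) * q ^ k)"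
    by (subst sum.lessThan_Suc_shift) (simp add: sum_distrib_left mult_ac)
  have e0: "e 0 < q" using Suc.prems by simp
  have dv: "(e 0 + q * (\<Sum>k<t. e (Suc k) * q ^ k)) div q = (\<Sum>k<t. e (Suc k) * q ^ k)"
    using e0 assms(1) by simp
  have md: "(e 0 + q * (\<Sum>k<t. e (Suc k) * q ^ k)) mod q = e 0"
    using e0 by simp
  show ?case
  proof (cases i)
    case 0
    then show ?thesis using md eq by (simp add: qdigit_0)
  next
    case (Suc i')
    have "\<forall>k<t. e (Suc k) < q" using Suc.prems by simp
    from Suc.IH[OF this, of i'] show ?thesis
      unfolding eq Suc qdigit_Suc dv by simp
  qed
qed

lemma digits_expand:
  assumes "q > 0" "c < q ^ t"
  shows "c = (\<Sum>i<t. qdigit q i c * q ^ i)"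
  using assms(2)
proof (induction t arbitrary: c)
  case 0
  then show ?case by simp
next
  case (Suc t)
  have "c div q < q ^ t" using Suc.prems assms(1)
    by (simp add: div_less_iff_less_mult mult.commute)
  note ih = Suc.IH[OF this]
  have "(\<Sum>i<Suc t. qdigit q i c * q ^ i) = c mod q + q * (\<Sum>i<t. qdigit q i (c div q) * q ^ i)"
    by (subst sum.lessThan_Suc_shift) (simp add: sum_distrib_left mult_ac qdigit_Suc qdigit_0)
  also have "\<dots> = c mod q + q * (c div q)" using ih by simp
  also have "\<dots> = c" by simp
  finally show ?case by simp
qed

lemma qdigit_lt: "q > 0 \<Longrightarrow> qdigit q i c < q"
  unfolding qdigit_def by simp

lemma qdigit_le: "q > 0 \<Longrightarrow> qdigit q i c \<le> q - 1"
  using qdigit_lt[of q i c] by linarith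

lemma geom_nat: "(\<Sum>i<t. (q - 1) * q ^ i) + 1 = (q::nat) ^ t" if "q > 0"
proof (induction t)
  case 0 then show ?case by simp
next
  case (Suc t)
  have "(\<Sum>i<Suc t. (q - 1) * q ^ i) + 1 = (q - 1) * q ^ t + q ^ t"
    using Suc by simp
  also have "\<dots> = q * q ^ t" using that by (cases q) auto
  finally show ?case by simp
qed

definition sg :: "nat \<Rightarrow> int" where "sg i = (if odd i then 1 else -1)"

definition OE :: "nat \<Rightarrow> nat \<Rightarrow> nat \<Rightarrow> int" where
  "OE q n s = (\<Sum>i<n. sg i * int (qdigit q i s))"

lemma OE_eq: "int (O_q q n s) - int (E_q q n s) = OE q n s"
proof -
  have o: "O_q q n s = (\<Sum>i<n. if odd i then qdigit q i s else 0)"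
    unfolding O_q_def by (subst sum.inter_filter[symmetric]) (auto intro: sum.cong)
  have e: "E_q q n s = (\<Sum>i<n. if even i then qdigit q i s else 0)"
    unfolding E_q_def by (subst sum.inter_filter[symmetric]) (auto intro: sum.cong)
  show ?thesis unfolding o e OE_def of_nat_sum sum_subtractf[symmetric]
    by (rule sum.cong) (auto simp: sg_def)
qed

lemma OplusE: "O_q q n s + E_q q n s = wt_q q n s"
proof -
  have o: "O_q q n s = (\<Sum>i<n. if odd i then qdigit q i s else 0)"
    unfolding O_q_def by (subst sum.inter_filter[symmetric]) (auto intro: sum.cong)
  have e: "E_q q n s = (\<Sum>i<n. if even i then qdigit q i s else 0)"
    unfolding E_q_def by (subst sum.inter_filter[symmetric]) (auto intro: sum.cong)
  show ?thesis unfolding o e wt_q_def sum.distrib[symmetric]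
    by (rule sum.cong) auto
qed

lemma card_odd: "card {i. i < 2 * m \<and> odd i} = m"
proof -
  have "{i. i < 2 * m \<and> odd i} = (\<lambda>k. 2 * k + 1) ` {..<m}"
    by (auto simp: image_def elim!: oddE)
  moreover have "inj_on (\<lambda>k::nat. 2 * k + 1) {..<m}" by (auto simp: inj_on_def)
  ultimately show ?thesis by (simp add: card_image)
qed

lemma card_even: "card {i. i < 2 * m \<and> even i} = m"
proof -
  have "{i. i < 2 * m \<and> even i} = (\<lambda>k. 2 * k) ` {..<m}"
    by (auto simp: image_def elim!: evenE)
  moreover have "inj_on (\<lambda>k::nat. 2 * k) {..<m}" by (auto simp: inj_on_def)
  ultimately show ?thesis by (simp add: card_image)
qed

lemma O_le: "q > 0 \<Longrightarrow> O_q q (2 * m) s \<le> m * (q - 1)"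
proof -
  assume q: "q > 0"
  have "O_q q (2*m) s \<le> (\<Sum>i\<in>{i. i < 2 * m \<and> odd i}. q - 1)"
    unfolding O_q_def by (rule sum_mono) (use qdigit_le[OF q] in auto)
  also have "\<dots> = m * (q - 1)" by (simp add: card_odd)
  finally show ?thesis .
qed

lemma E_le: "q > 0 \<Longrightarrow> E_q q (2 * m) s \<le> m * (q - 1)"
proof -
  assume q: "q > 0"
  have "E_q q (2*m) s \<le> (\<Sum>i\<in>{i. i < 2 * m \<and> even i}. q - 1)"
    unfolding E_q_def by (rule sum_mono) (use qdigit_le[OF q] in auto)
  also have "\<dots> = m * (q - 1)" by (simp add: card_even)
  finally show ?thesis .
qed

lemma sg_sum: "(\<Sum>i<t. sg i) = (if even t then 0 else -1)"
  by (induction t) (auto simp: sg_def)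

lemma repr_wt_OE:
  assumes "q > 0" "\<forall>i<t. e i < q" "t \<le> n"
  shows "wt_q q n (\<Sum>k<t. e k * q ^ k) = (\<Sum>k<t. e k)"
    and "OE q n (\<Sum>k<t. e k * q ^ k) = (\<Sum>k<t. sg k * int (e k))"
proof -
  have sub: "{..<t} \<subseteq> {..<n}" using assms(3) by auto
  show "wt_q q n (\<Sum>k<t. e k * q ^ k) = (\<Sum>k<t. e k)"
    unfolding wt_q_def qdigit_sum[OF assms(1,2)]
    by (subst sum.mono_neutral_right[OF _ sub]) auto
  show "OE q n (\<Sum>k<t. e k * q ^ k) = (\<Sum>k<t. sg k * int (e k))"
    unfolding OE_def qdigit_sum[OF assms(1,2)]
    by (subst sum.mono_neutral_right[OF _ sub]) auto
qed

lemma D_bounds: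
  fixes d :: "nat \<Rightarrow> nat"
  shows "\<bar>\<Sum>i<t. sg i * int (d i)\<bar> \<le> int (\<Sum>i<t. d i)"
    and "even ((\<Sum>i<t. sg i * int (d i)) - int (\<Sum>i<t. d i))"
proof -
  have "\<bar>\<Sum>i<t. sg i * int (d i)\<bar> \<le> (\<Sum>i<t. \<bar>sg i * int (d i)\<bar>)" by (rule sum_abs)
  also have "\<dots> = int (\<Sum>i<t. d i)"
  proof -
    have "\<And>i. \<bar>sg i * int (d i)\<bar> = int (d i)" by (simp add: sg_def abs_mult)
    then show ?thesis by (simp add: of_nat_sum)
  qed
  finally show "\<bar>\<Sum>i<t. sg i * int (d i)\<bar> \<le> int (\<Sum>i<t. d i)" .
  have "(\<Sum>i<t. sg i * int (d i)) - int (\<Sum>i<t. d i) = (\<Sum>i<t. (sg i - 1) * int (d i))"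
    by (simp add: of_nat_sum sum_subtractf[symmetric] algebra_simps)
  also have "even \<dots>" by (rule dvd_sum) (auto simp: sg_def)
  finally show "even ((\<Sum>i<t. sg i * int (d i)) - int (\<Sum>i<t. d i))" .
qed




lemma fermat_ff:
  fixes g :: "'a::{finite,field}"
  assumes "g \<noteq> 0"
  shows "g ^ (card (UNIV :: 'a set) - 1) = 1"
proof -
  have fin: "finite (UNIV - {0::'a})" by simp
  have "(\<Prod>y\<in>UNIV-{0}. g * y) = g ^ card (UNIV - {0::'a}) * \<Prod>(UNIV-{0::'a})"
    by (simp add: prod.distrib)
  moreover have "(\<Prod>y\<in>UNIV-{0}. g * y) = (\<Prod>y\<in>UNIV-{0::'a}. y)"
    by (rule prod.reindex_bij_witness[of _ "\<lambda>y. y / g" "\<lambda>y. g * y"]) (use assms in auto)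
  moreover have "\<Prod>(UNIV-{0::'a}) \<noteq> 0" by simp
  moreover have "card (UNIV - {0::'a}) = card (UNIV :: 'a set) - 1"
    by (simp add: card_Diff_singleton)
  ultimately show ?thesis by simp
qed

lemma Lambda_S:
  "Lambda x s = (\<Sum>g\<in>{g. g \<noteq> 0 \<and> x g \<noteq> 0}. x g * g ^ s)"
  unfolding Lambda_def
  by (rule sum.mono_neutral_right) auto

lemma Lambda_period:
  fixes x :: "'a::{finite,field} \<Rightarrow> 'a"
  shows "Lambda x (card (UNIV :: 'a set) - 1 + u) = Lambda x u"
  unfolding Lambda_def
proof (rule sum.cong[OF refl])
  fix g :: 'a assume "g \<in> UNIV - {0}"
  then have "g ^ (card (UNIV :: 'a set) - 1) = 1" by (intro fermat_ff) auto
  then show "x g * g ^ (card (UNIV :: 'a set) - 1 + u) = x g * g ^ u" by (simp add: power_add)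
qed

lemma poly_sum_bound:
  fixes p :: "'a::comm_ring_1 poly"
  assumes "degree p \<le> D"
  shows "poly p y = (\<Sum>i\<le>D. coeff p i * y ^ i)"
proof -
  have "poly p y = poly (\<Sum>i\<le>D. monom (coeff p i) i) y"
    using poly_as_sum_of_monoms'[OF assms] by simp
  also have "\<dots> = (\<Sum>i\<le>D. coeff p i * y ^ i)"
    by (simp add: poly_sum poly_monom)
  finally show ?thesis .
qed

lemma L1:
  fixes x :: "'a::{finite,field} \<Rightarrow> 'a"
  assumes "degree P \<le> D"
  shows "(\<Sum>g\<in>UNIV-{0}. x g * poly P g) = (\<Sum>s\<le>D. coeff P s * Lambda x s)"
  unfolding poly_sum_bound[OF assms] Lambda_def sum_distrib_left
  by (subst sum.swap) (simp add: mult_ac)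

lemma Lambda_delta_nz:
  fixes x :: "'a::{finite,field} \<Rightarrow> 'a"
  assumes "card {g. g \<noteq> 0 \<and> x g \<noteq> 0} = d" "d \<ge> 1"
    and "\<forall>s\<in>{1..<d}. Lambda x s = 0"
  shows "Lambda x d \<noteq> 0"
proof
  assume z: "Lambda x d = 0"
  define S where "S = {g. g \<noteq> 0 \<and> x g \<noteq> 0}"
  have finS: "finite S" by simp
  have "card S = d" using assms(1) S_def by simp
  then have "S \<noteq> {}" using assms(2) by auto
  then obtain g0 where g0: "g0 \<in> S" by auto
  define P where "P = [:0,1:] * (\<Prod>h\<in>S-{g0}. [:-h,1:])"
  have "degree P \<le> degree [:0::'a,1:] + degree (\<Prod>h\<in>S-{g0}. [:-h,1:])"
    unfolding P_def by (rule degree_mult_le)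
  also have "degree (\<Prod>h\<in>S-{g0}. [:-h,1:]) \<le> (\<Sum>h\<in>S-{g0}. degree [:-h,1::'a:])"
    using degree_prod_sum_le[of "S-{g0}" "\<lambda>h. [:-h,1:]"] by (simp add: o_def)
  also have "(\<Sum>h\<in>S-{g0}. degree [:-h,1::'a:]) = d - 1"
    using assms(1) g0 finS S_def by (simp add: card_Diff_singleton)
  finally have degP: "degree P \<le> d" using assms(2) by simp
  have c0: "coeff P 0 = 0" unfolding P_def by (simp add: poly_0_coeff_0[symmetric])
  have "(\<Sum>g\<in>UNIV-{0}. x g * poly P g) = (\<Sum>s\<le>d. coeff P s * Lambda x s)"
    by (rule L1[OF degP])
  also have "\<dots> = 0"
  proof (rule sum.neutral, intro ballI)
    fix s assume "s \<in> {..d}"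
    then show "coeff P s * Lambda x s = 0"
      using c0 z assms(3) by (cases "s = 0"; cases "s = d") auto
  qed
  finally have sum0: "(\<Sum>g\<in>UNIV-{0}. x g * poly P g) = 0" .
  have "(\<Sum>g\<in>UNIV-{0}. x g * poly P g) = x g0 * poly P g0 + (\<Sum>g\<in>UNIV-{0}-{g0}. x g * poly P g)"
    using g0 S_def by (subst sum.remove[of _ g0]) auto
  also have "(\<Sum>g\<in>UNIV-{0}-{g0}. x g * poly P g) = 0"
  proof (rule sum.neutral, intro ballI)
    fix g assume g: "g \<in> UNIV - {0} - {g0}"
    show "x g * poly P g = 0"
    proof (cases "x g = 0")
      case False
      then have "g \<in> S - {g0}" using g S_def by auto
      then have "(\<Prod>h\<in>S-{g0}. poly [:-h,1:] g) = 0"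
        using finS by (subst prod_zero_iff) auto
      then show ?thesis unfolding P_def by (simp add: poly_prod)
    qed simp
  qed
  finally have "x g0 * poly P g0 = 0" using sum0 by simp
  moreover have "x g0 \<noteq> 0" "g0 \<noteq> 0" using g0 S_def by auto
  moreover have "(\<Prod>h\<in>S-{g0}. poly [:-h,1:] g0) \<noteq> 0"
    using finS by (subst prod_zero_iff) auto
  ultimately show False unfolding P_def by (simp add: poly_prod)
qed

lemma locator_degree:
  fixes x :: "'a::{finite,field} \<Rightarrow> 'a"
  shows "degree (locator x) \<le> card {g. g \<noteq> 0 \<and> x g \<noteq> 0}"
proof -
  have "degree (locator x) \<le> (\<Sum>h\<in>{g. g \<noteq> 0 \<and> x g \<noteq> 0}. degree [:1, -h:])"
    unfolding locator_def
    using degree_prod_sum_le[of "{g. g \<noteq> 0 \<and> x g \<noteq> 0}" "\<lambda>h. [:1, -h:]"] by (simp add: o_def)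
  also have "\<dots> \<le> (\<Sum>h\<in>{g. g \<noteq> 0 \<and> x g \<noteq> 0}. 1)"
    by (rule sum_mono) simp
  finally show ?thesis by simp
qed

lemma locator_coeff0:
  fixes x :: "'a::{finite,field} \<Rightarrow> 'a"
  shows "coeff (locator x) 0 = 1"
  unfolding poly_0_coeff_0[symmetric] locator_def by (simp add: poly_prod)

lemma key_eq:
  fixes x :: "'a::{finite,field} \<Rightarrow> 'a"
  assumes "card {g. g \<noteq> 0 \<and> x g \<noteq> 0} = d" "d \<le> T"
  shows "(\<Sum>j\<le>d. coeff (locator x) j * Lambda x (T - j)) = 0"
proof -
  define S where "S = {g. g \<noteq> 0 \<and> x g \<noteq> 0}"
  have deg: "degree (locator x) \<le> d" using locator_degree[of x] assms(1) by simp
  have "(\<Sum>j\<le>d. coeff (locator x) j * Lambda x (T - j))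
      = (\<Sum>g\<in>S. x g * g ^ T * (\<Sum>j\<le>d. coeff (locator x) j * (inverse g) ^ j))"
    unfolding Lambda_S S_def[symmetric] sum_distrib_left
    apply (subst sum.swap)
    apply (rule sum.cong[OF refl])
    apply (rule sum.cong[OF refl])
    subgoal for g j
      using assms(2) by (auto simp: S_def power_diff power_inverse field_simps)
    done
  also have "\<dots> = 0"
  proof (rule sum.neutral, intro ballI)
    fix g assume g: "g \<in> S"
    have "(\<Sum>j\<le>d. coeff (locator x) j * (inverse g) ^ j) = poly (locator x) (inverse g)"
      by (rule poly_sum_bound[OF deg, symmetric])
    also have "\<dots> = 0"
      unfolding locator_def poly_prod S_def[symmetric]
      using g by (subst prod_zero_iff) (auto simp: S_def intro!: bexI[of _ g])
    finally show "x g * g ^ T * (\<Sum>j\<le>d. coeff (locator x) j * (inverse g) ^ j) = 0" by simp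
  qed
  finally show ?thesis .
qed




lemma compl_repr:
  assumes "q > 0" "c < q ^ t"
  shows "q ^ t - 1 - c = (\<Sum>i<t. (q - 1 - qdigit q i c) * q ^ i)"
proof -
  have hc: "c = (\<Sum>i<t. qdigit q i c * q ^ i)" by (rule digits_expand[OF assms])
  have "(\<Sum>i<t. (q - 1 - qdigit q i c) * q ^ i) + (\<Sum>i<t. qdigit q i c * q ^ i)
      = (\<Sum>i<t. (q - 1) * q ^ i)"
    unfolding sum.distrib[symmetric]
  proof (rule sum.cong[OF refl])
    fix i
    have "qdigit q i c \<le> q - 1" by (rule qdigit_le[OF assms(1)])
    then have h: "q - 1 - qdigit q i c + qdigit q i c = q - 1" by linarith
    show "(q - 1 - qdigit q i c) * q ^ i + qdigit q i c * q ^ i = (q - 1) * q ^ i"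
      by (metis add_mult_distrib h)
  qed
  moreover have "(\<Sum>i<t. (q - 1) * q ^ i) + 1 = q ^ t" by (rule geom_nat[OF assms(1)])
  ultimately show ?thesis using hc by linarith
qed

lemma compl_stats:
  assumes "q > 0"
  shows "int (\<Sum>i<t. q - 1 - qdigit q i c) = int t * (int q - 1) - int (\<Sum>i<t. qdigit q i c)"
    and "(\<Sum>i<t. sg i * int (q - 1 - qdigit q i c))
          = (int q - 1) * (\<Sum>i<t. sg i) - (\<Sum>i<t. sg i * int (qdigit q i c))"
proof -
  have e: "int (q - 1 - qdigit q i c) = int q - 1 - int (qdigit q i c)" for i
  proof -
    have h: "1 + qdigit q i c \<le> q" using qdigit_lt[OF assms, of i c] by simp
    have "int (q - (1 + qdigit q i c)) = int q - int (1 + qdigit q i c)" by (rule of_nat_diff[OF h])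
    then show ?thesis by (simp add: diff_diff_left)
  qed
  show "int (\<Sum>i<t. q - 1 - qdigit q i c) = int t * (int q - 1) - int (\<Sum>i<t. qdigit q i c)"
    unfolding of_nat_sum e by (simp add: sum_subtractf)
  show "(\<Sum>i<t. sg i * int (q - 1 - qdigit q i c))
          = (int q - 1) * (\<Sum>i<t. sg i) - (\<Sum>i<t. sg i * int (qdigit q i c))"
    unfolding e by (simp add: algebra_simps sum_subtractf sum_distrib_left sum.distrib)
qed

lemma W_zero:
  assumes "q > 0" "c < q ^ t" "(\<Sum>i<t. qdigit q i c) = 0"
  shows "c = 0"
proof -
  have "\<forall>i\<in>{..<t}. qdigit q i c = 0" using assms(3) by simp
  then show ?thesis using digits_expand[OF assms(1,2)] by simp
qed

lemma W_one:
  assumes "q > 0" "c < q ^ t" "(\<Sum>i<t. qdigit q i c) = 1"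
  shows "\<exists>j<t. c = q ^ j"
proof -
  define d where "d i = qdigit q i c" for i
  have W: "(\<Sum>i<t. d i) = 1" using assms(3) d_def by simp
  obtain j where j: "j < t" "d j \<noteq> 0"
    using W by (metis lessThan_iff sum.neutral zero_neq_one)
  have split: "(\<Sum>i<t. d i) = d j + (\<Sum>i\<in>{..<t}-{j}. d i)"
    using j by (subst sum.remove[of _ j]) auto
  then have dj: "d j = 1" and rest: "(\<Sum>i\<in>{..<t}-{j}. d i) = 0" using W j by linarith+
  have rest0: "\<forall>i\<in>{..<t}-{j}. d i = 0" using rest by simp
  have "c = (\<Sum>i<t. d i * q ^ i)" using digits_expand[OF assms(1,2)] d_def by simp
  also have "\<dots> = d j * q ^ j + (\<Sum>i\<in>{..<t}-{j}. d i * q ^ i)"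
    using j by (subst sum.remove[of _ j]) auto
  also have "(\<Sum>i\<in>{..<t}-{j}. d i * q ^ i) = 0" using rest0 by simp
  finally show ?thesis using dj j by auto
qed

lemma mem_Z:
  assumes "0 < s" "s \<le> q ^ n - 1" "int (wt_q q n s) \<le> int n * (int q - 1) - int r - 1"
  shows "\<alpha> ^ s \<in> Z_rI \<alpha> q n m r I"
proof -
  have "\<alpha> ^ s \<in> Z_set \<alpha> q n r"
    unfolding Z_set_def mem_Collect_eq by (rule exI[of _ s]) (use assms in auto)
  then show ?thesis unfolding Z_rI_def by blast
qed

lemma mem_Theta:
  assumes "q > 0" "n = 2 * m" "s \<le> q ^ n - 1"
    and "int (wt_q q n s) = int n * (int q - 1) - int r"
    and "nat \<bar>OE q n s\<bar> \<notin> I"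
  shows "\<alpha> ^ s \<in> Z_rI \<alpha> q n m r I"
proof -
  define k where "k = nat \<bar>OE q n s\<bar>"
  have O: "O_q q n s \<le> m * (q - 1)" using O_le[OF assms(1)] assms(2) by simp
  have E: "E_q q n s \<le> m * (q - 1)" using E_le[OF assms(1)] assms(2) by simp
  have oe: "OE q n s = int (O_q q n s) - int (E_q q n s)" using OE_eq by simp
  have b1: "OE q n s \<le> int (m * (q - 1))" "- OE q n s \<le> int (m * (q - 1))"
    unfolding oe using O E by linarith+
  then have "\<bar>OE q n s\<bar> \<le> int (m * (q - 1))" by (simp add: abs_le_iff)
  then have kb: "k \<le> m * (q - 1)" unfolding k_def by (simp add: nat_le_iff)
  have ope: "int (O_q q n s) + int (E_q q n s) = int (wt_q q n s)"
    using OplusE[of q n s] by linarith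
  have "even (int k) = even (int (O_q q n s) - int (E_q q n s))"
    unfolding k_def oe by (simp add: dvd_abs_iff)
  also have "\<dots> = even (int (O_q q n s) + int (E_q q n s))"
    by (simp only: even_diff)
  also have "\<dots> = even (int (wt_q q n s))" using ope by simp
  also have "\<dots> = even (int r)"
  proof -
    have "int (wt_q q n s) + int r = 2 * (int m * (int q - 1))" using assms(2,4) by simp
    then show ?thesis by (metis dvd_triv_left even_add)
  qed
  finally have kp: "even k = even r" by simp
  have kM: "k \<in> M_set q m r - I" using kb kp assms(5) k_def unfolding M_set_def by auto
  have "\<alpha> ^ s \<in> Theta_set \<alpha> q n r k"
    unfolding Theta_set_def mem_Collect_eq
    by (rule exI[of _ s]) (use assms(3,4) k_def oe in auto)
  then show ?thesis unfolding Z_rI_def using kM by blast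
qed




lemma part_i:
  assumes q2: "q \<ge> 2" and n: "n = 2 * m" and rho: "\<rho> < n" and r: "r = \<rho> * (q - 1) + 1"
    and t: "t = n - \<rho>" and dl: "\<delta> = q ^ t - 1"
    and Io: "odd \<rho> \<Longrightarrow> {q, q - 2, nat \<bar>int q - 4\<bar>} \<inter> I = {}"
    and Ie: "even \<rho> \<Longrightarrow> {1, 3} \<inter> I = {}"
    and s: "1 \<le> s" "s < \<delta>"
  shows "\<alpha> ^ s \<in> Z_rI \<alpha> q n m r I" and "s \<le> q ^ n - 1"
proof -
  have q0: "q > 0" using q2 by simp
  have tn: "t \<le> n" using t by simp
  have "q ^ t \<le> q ^ n" using q0 tn by (simp add: power_increasing)
  then show sb: "s \<le> q ^ n - 1" using s dl by simp
  define c where "c = \<delta> - s"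
  have c0: "c > 0" using s c_def by simp
  have cq: "c < q ^ t" using c_def dl s by simp
  define W where "W = (\<Sum>i<t. qdigit q i c)"
  define D where "D = (\<Sum>i<t. sg i * int (qdigit q i c))"
  define e where "e i = q - 1 - qdigit q i c" for i
  have hs: "s = (\<Sum>i<t. e i * q ^ i)"
    using compl_repr[OF q0 cq] c_def dl s e_def by simp
  have eb: "\<forall>i<t. e i < q" using q0 e_def by auto
  have wts: "wt_q q n s = (\<Sum>i<t. e i)"
    by (subst hs) (rule repr_wt_OE(1)[OF q0 eb tn])
  have oes: "OE q n s = (\<Sum>i<t. sg i * int (e i))"
    by (subst hs) (rule repr_wt_OE(2)[OF q0 eb tn])
  have iwt: "int (wt_q q n s) = int t * (int q - 1) - int W"
    unfolding wts e_def W_def by (rule compl_stats(1)[OF q0])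
  have ioe: "OE q n s = (int q - 1) * (\<Sum>i<t. sg i) - D"
    unfolding oes e_def D_def by (rule compl_stats(2)[OF q0])
  have W0: "W \<noteq> 0"
  proof
    assume "W = 0"
    then have "c = 0" using W_zero[OF q0 cq] W_def by simp
    then show False using c0 by simp
  qed
  have tint: "int t = int n - int \<rho>" using t rho by simp
  have rint: "int r = int \<rho> * (int q - 1) + 1" using r q0 by (simp add: of_nat_diff)
  have nint: "int n = int t + int \<rho>" using tint by simp
  have rhs: "int n * (int q - 1) - int r = int t * (int q - 1) - 1"
    unfolding nint rint by (simp add: algebra_simps)
  have tpar: "even t = even \<rho>" using t n rho by presburger
  have Db: "\<bar>D\<bar> \<le> int W" "even (D - int W)"
    unfolding D_def W_def by (rule D_bounds)+
  show "\<alpha> ^ s \<in> Z_rI \<alpha> q n m r I"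
  proof (cases "W \<ge> 2")
    case True
    show ?thesis
      by (rule mem_Z) (use s sb iwt rhs True in linarith)+
  next
    case False
    then have W1: "W = 1" using W0 by simp
    have "D \<noteq> 0" using Db(2) W1 by auto
    then have D1: "D = 1 \<or> D = -1" using Db(1) W1 by (auto simp: abs_le_iff)
    show ?thesis
    proof (rule mem_Theta[OF q0 n sb])
      show "int (wt_q q n s) = int n * (int q - 1) - int r" using iwt rhs W1 by simp
      show "nat \<bar>OE q n s\<bar> \<notin> I"
      proof (cases "even \<rho>")
        case True
        then have "even t" using tpar by simp
        then have "nat \<bar>OE q n s\<bar> = 1" using ioe D1 by (auto simp: sg_sum)
        then show ?thesis using Ie[OF True] by auto
      next
        case False
        then have "odd t" using tpar by simp
        then have "OE q n s = - (int q - 1) - D" using ioe by (simp add: sg_sum)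
        then have "nat \<bar>OE q n s\<bar> = q \<or> nat \<bar>OE q n s\<bar> = q - 2" using D1 q2 by auto
        then show ?thesis using Io[OF False] by auto
      qed
    qed
  qed
qed

lemma part_ii:
  assumes q2: "q \<ge> 2" and n: "n = 2 * m" and rho: "\<rho> < n" and r: "r = \<rho> * (q - 1) + 1"
    and t: "t = n - \<rho>" and dl: "\<delta> = q ^ t - 1"
    and Io: "odd \<rho> \<Longrightarrow> {q, q - 2, nat \<bar>int q - 4\<bar>} \<inter> I = {}"
    and Ie: "even \<rho> \<Longrightarrow> {1, 3} \<inter> I = {}"
    and rho1: "1 \<le> \<rho>"
    and u: "1 \<le> u" "u < \<delta>" "u \<notin> I_set q t"
  shows "\<alpha> ^ (\<delta> + u) \<in> Z_rI \<alpha> q n m r I" and "\<delta> + u \<le> q ^ n - 1"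
proof -
  have q0: "q > 0" using q2 by simp
  have tn: "Suc t \<le> n" using t rho rho1 by simp
  have a: "q ^ Suc t \<le> q ^ n" by (rule power_increasing[OF tn]) (use q0 in simp)
  have b: "2 * q ^ t \<le> q * q ^ t" by (rule mult_le_mono1[OF q2])
  have "2 * q ^ t \<le> q ^ n" using a b by (metis power_Suc order_trans)
  then show sb: "\<delta> + u \<le> q ^ n - 1" using u dl by linarith
  define s where "s = \<delta> + u"
  define c where "c = q ^ t - u"
  have c0: "c > 0" using u c_def dl by simp
  have cq: "c < q ^ t" using c_def u dl by simp
  define W where "W = (\<Sum>i<t. qdigit q i c)"
  define D where "D = (\<Sum>i<t. sg i * int (qdigit q i c))"
  define e where "e i = (if i < t then q - 1 - qdigit q i c else 1)" for i
  have "(\<Sum>i<Suc t. e i * q ^ i) = (\<Sum>i<t. e i * q ^ i) + q ^ t"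
    by (simp add: e_def)
  also have "(\<Sum>i<t. e i * q ^ i) = (\<Sum>i<t. (q - 1 - qdigit q i c) * q ^ i)"
    by (rule sum.cong) (auto simp: e_def)
  also have "\<dots> = u - 1" using compl_repr[OF q0 cq] c_def u dl by simp
  finally have hs: "s = (\<Sum>i<Suc t. e i * q ^ i)" using s_def dl u by simp
  have eb: "\<forall>i<Suc t. e i < q" using q2 e_def by auto
  have "wt_q q n s = (\<Sum>i<Suc t. e i)"
    by (subst hs) (rule repr_wt_OE(1)[OF q0 eb tn])
  also have "\<dots> = (\<Sum>i<t. q - 1 - qdigit q i c) + 1"
    by (simp add: e_def)
  finally have wts: "wt_q q n s = (\<Sum>i<t. q - 1 - qdigit q i c) + 1" .
  have "OE q n s = (\<Sum>i<Suc t. sg i * int (e i))"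
    by (subst hs) (rule repr_wt_OE(2)[OF q0 eb tn])
  also have "\<dots> = (\<Sum>i<t. sg i * int (q - 1 - qdigit q i c)) + sg t"
    by (simp add: e_def)
  finally have oes: "OE q n s = (\<Sum>i<t. sg i * int (q - 1 - qdigit q i c)) + sg t" .
  have iwt: "int (wt_q q n s) = int t * (int q - 1) - int W + 1"
    unfolding wts W_def using compl_stats(1)[OF q0, where t=t and c=c] by simp
  have ioe: "OE q n s = (int q - 1) * (\<Sum>i<t. sg i) - D + sg t"
    unfolding oes D_def using compl_stats(2)[OF q0, where t=t and c=c] by simp
  have W0: "W \<noteq> 0"
  proof
    assume "W = 0"
    then have "c = 0" using W_zero[OF q0 cq] W_def by simp
    then show False using c0 by simp
  qed
  have Wn1: "W \<noteq> 1"
  proof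
    assume "W = 1"
    then obtain j where j: "j < t" "c = q ^ j" using W_one[OF q0 cq] W_def by auto
    then have "u = q ^ t - q ^ j" using c_def cq u dl by linarith
    then have "u \<in> I_set q t" unfolding I_set_def using j by blast
    then show False using u by simp
  qed
  have tint: "int t = int n - int \<rho>" using t rho by simp
  have rint: "int r = int \<rho> * (int q - 1) + 1" using r q0 by (simp add: of_nat_diff)
  have nint: "int n = int t + int \<rho>" using tint by simp
  have rhs: "int n * (int q - 1) - int r = int t * (int q - 1) - 1"
    unfolding nint rint by (simp add: algebra_simps)
  have tpar: "even t = even \<rho>" using t n rho by presburger
  have Db: "\<bar>D\<bar> \<le> int W" "even (D - int W)"
    unfolding D_def W_def by (rule D_bounds)+
  have "\<alpha> ^ s \<in> Z_rI \<alpha> q n m r I"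
  proof (cases "W \<ge> 3")
    case True
    show ?thesis
      by (rule mem_Z) (use s_def u sb iwt rhs True in linarith)+
  next
    case False
    then have W2: "W = 2" using W0 Wn1 by simp
    have "D \<noteq> 1" "D \<noteq> -1" using Db(2) W2 by auto
    then have D2: "D = 2 \<or> D = 0 \<or> D = -2" using Db(1) W2 by (auto simp: abs_le_iff)
    show ?thesis
    proof (rule mem_Theta[OF q0 n])
      show "s \<le> q ^ n - 1" using sb s_def by simp
      show "int (wt_q q n s) = int n * (int q - 1) - int r" using iwt rhs W2 by simp
      show "nat \<bar>OE q n s\<bar> \<notin> I"
      proof (cases "even \<rho>")
        case True
        then have "even t" using tpar by simp
        moreover have "sg t = -1" using \<open>even t\<close> by (simp add: sg_def)
        ultimately have "OE q n s = - D - 1" using ioe by (simp add: sg_sum)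
        then have "nat \<bar>OE q n s\<bar> = 1 \<or> nat \<bar>OE q n s\<bar> = 3" using D2 by auto
        then show ?thesis using Ie[OF True] by auto
      next
        case False
        then have "odd t" using tpar by simp
        moreover have "sg t = 1" using \<open>odd t\<close> by (simp add: sg_def)
        ultimately have "OE q n s = - (int q - 1) - D + 1" using ioe by (simp add: sg_sum)
        then have "nat \<bar>OE q n s\<bar> = q \<or> nat \<bar>OE q n s\<bar> = q - 2
            \<or> nat \<bar>OE q n s\<bar> = nat \<bar>int q - 4\<bar>" using D2 q2 by auto
        then show ?thesis using Io[OF False] by auto
      qed
    qed
  qed
  then show "\<alpha> ^ (\<delta> + u) \<in> Z_rI \<alpha> q n m r I" using s_def by simp
qed




lemma I_set_bounds:
  assumes "q \<ge> 2" "u \<in> I_set q t"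
  shows "1 \<le> u" "u \<le> q ^ t - 1"
proof -
  obtain a where a: "a < t" "u = q ^ t - q ^ a" using assms(2) unfolding I_set_def by blast
  have "q ^ a < q ^ t" using a assms(1) by (simp add: power_strict_increasing)
  moreover have "1 \<le> q ^ a" using assms(1) by simp
  ultimately show "1 \<le> u" "u \<le> q ^ t - 1" using a by linarith+
qed

lemma I_set_finite: "finite (I_set q t)"
proof -
  have "I_set q t = (\<lambda>j. q ^ t - q ^ j) ` {..<t}" unfolding I_set_def by auto
  then show ?thesis by simp
qed

lemma I_set_delta: "t \<ge> 1 \<Longrightarrow> q ^ t - 1 \<in> I_set q t"
  unfolding I_set_def by (rule CollectI, rule exI[of _ 0]) simp

lemma I_set_diff:
  assumes q2: "q \<ge> 2" and j: "j \<in> I_set q t" and ju: "j < u" and ud: "u \<le> q ^ t - 1"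
  shows "u - j \<notin> I_set q t"
proof
  assume uj: "u - j \<in> I_set q t"
  obtain a where a: "a < t" "j = q ^ t - q ^ a" using j unfolding I_set_def by blast
  obtain b where b: "b < t" "u - j = q ^ t - q ^ b" using uj unfolding I_set_def by blast
  have t1: "t = Suc (t - 1)" using a by simp
  have pa: "q ^ a \<le> q ^ (t - 1)" using a q2 by (intro power_increasing) auto
  have pb: "q ^ b \<le> q ^ (t - 1)" using b q2 by (intro power_increasing) auto
  have "2 * q ^ (t - 1) \<le> q * q ^ (t - 1)" by (rule mult_le_mono1[OF q2])
  also have "q * q ^ (t - 1) = q ^ t" by (subst (2) t1) simp
  finally have "q ^ a + q ^ b \<le> q ^ t" using pa pb by linarith
  moreover have "q ^ a \<le> q ^ t" "q ^ b \<le> q ^ t" using a b q2 by (auto intro: power_increasing)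
  ultimately show False using a b ju ud by linarith
qed

theorem proposition5p1:
  fixes \<alpha> :: "'a::{finite,field}" and p l m n q N r \<rho> \<delta> :: nat
    and I :: "nat set" and x :: "'a \<Rightarrow> 'a"
  assumes "prime p" and "l \<ge> 1" and "q = p ^ l" and "m \<ge> 1" and "n = 2 * m"
    and "card (UNIV :: 'a set) = q ^ n" and "N = q ^ n - 1"
    and "primitive_elem \<alpha>"
    and "\<rho> \<le> n - 1" and "r = \<rho> * (q - 1) + 1"
    and "I \<subseteq> M_set q m r"
    and "odd \<rho> \<Longrightarrow> {q, q - 2, nat \<bar>int q - 4\<bar>} \<inter> I = {}"
    and "even \<rho> \<Longrightarrow> {1, 3} \<inter> I = {}"
    and "\<delta> = q ^ (n - \<rho>) - 1"
    and "in_code \<alpha> q n m r I x"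
    and "hamming_wt x = \<delta>"
  shows "(\<forall>s\<in>{1..<\<delta>}. Lambda x s = 0)
    \<and> (\<forall>u\<in>{1..<\<delta>}.
          (u \<notin> I_set q (n - \<rho>) \<longrightarrow> Lambda x (\<delta> + u) = 0 \<and> coeff (locator x) u = 0)
        \<and> (u \<in> I_set q (n - \<rho>) \<longrightarrow> Lambda x \<delta> \<noteq> 0 \<and>
              coeff (locator x) u = - Lambda x (\<delta> + u) / Lambda x \<delta>))
    \<and> locator x = 1 - (\<Sum>u\<in>I_set q (n - \<rho>).
          smult (Lambda x (\<delta> + u) / Lambda x \<delta>) (monom 1 u))"
proof -
  note A = assms
  define t where "t = n - \<rho>"
  define \<sigma> where "\<sigma> = locator x"
  define J where "J = I_set q t"
  have p2: "p \<ge> 2" using A(1) by (rule prime_ge_2_nat)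
  have "p ^ 1 \<le> p ^ l" using A(2) p2 by (intro power_increasing) auto
  then have q2: "q \<ge> 2" using A(3) p2 by simp
  have rho: "\<rho> < n" using A(4,5,9) by simp
  have t1: "t \<ge> 1" using rho t_def by simp
  have dl: "\<delta> = q ^ t - 1" using A(14) t_def by simp
  have "q ^ 1 \<le> q ^ t" using t1 q2 by (intro power_increasing) auto
  then have d1: "\<delta> \<ge> 1" using dl q2 by simp
  have cardS: "card {g. g \<noteq> 0 \<and> x g \<noteq> 0} = \<delta>" using A(16) by (simp add: hamming_wt_def)
  have code: "Lambda x s = 0" if "1 \<le> s" "s \<le> q ^ n - 1" "\<alpha> ^ s \<in> Z_rI \<alpha> q n m r I" for s
    using A(15) that unfolding in_code_def Lambda_def by auto
  have Zi: "\<forall>s\<in>{1..<\<delta>}. Lambda x s = 0"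
  proof
    fix s assume s: "s \<in> {1..<\<delta>}"
    show "Lambda x s = 0"
      by (rule code)
        (use s part_i(1)[OF q2 A(5) rho A(10) t_def dl A(12) A(13), where s=s and \<alpha>=\<alpha>]
              part_i(2)[OF q2 A(5) rho A(10) t_def dl A(12) A(13), where s=s] in auto)
  qed
  have Zii: "Lambda x (\<delta> + u) = 0" if u: "1 \<le> u" "u < \<delta>" "u \<notin> J" for u
  proof (cases "\<rho> = 0")
    case True
    then have "\<delta> = card (UNIV :: 'a set) - 1" using dl t_def A(6) by simp
    then have "Lambda x (\<delta> + u) = Lambda x u" using Lambda_period by simp
    then show ?thesis using Zi u by simp
  next
    case False
    then have r1: "1 \<le> \<rho>" by simp
    show ?thesis
      by (rule code)
        (use u part_ii(1)[OF q2 A(5) rho A(10) t_def dl A(12) A(13) r1, where u=u and \<alpha>=\<alpha>]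
              part_ii(2)[OF q2 A(5) rho A(10) t_def dl A(12) A(13) r1, where u=u] J_def in auto)
  qed
  have Lnz: "Lambda x \<delta> \<noteq> 0" by (rule Lambda_delta_nz[OF cardS d1 Zi])
  have Jb: "1 \<le> u" "u \<le> \<delta>" if "u \<in> J" for u
    using I_set_bounds[OF q2, of u t] that J_def dl by auto
  have dJ: "\<delta> \<in> J" using I_set_delta[OF t1] J_def dl by simp
  have finJ: "finite J" using I_set_finite J_def by simp
  have c0: "coeff \<sigma> 0 = 1" unfolding \<sigma>_def by (rule locator_coeff0)
  have degs: "degree \<sigma> \<le> \<delta>" unfolding \<sigma>_def using locator_degree[of x] cardS by simp
  have Q: "1 \<le> u \<longrightarrow> u \<le> \<delta> \<longrightarrow> coeff \<sigma> u * Lambda x \<delta> = - Lambda x (\<delta> + u)" for u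
  proof (induction u rule: less_induct)
    case (less u)
    show ?case
    proof (intro impI)
      assume u1: "1 \<le> u" and ud: "u \<le> \<delta>"
      define f where "f j = coeff \<sigma> j * Lambda x (\<delta> + u - j)" for j
      have key: "(\<Sum>j\<le>\<delta>. f j) = 0"
        unfolding f_def \<sigma>_def by (rule key_eq[OF cardS]) simp
      have s1: "(\<Sum>j\<le>\<delta>. f j) = f 0 + (\<Sum>j\<in>{..\<delta>}-{0}. f j)"
        by (rule sum.remove) auto
      have s2: "(\<Sum>j\<in>{..\<delta>}-{0}. f j) = f u + (\<Sum>j\<in>{..\<delta>}-{0}-{u}. f j)"
        by (rule sum.remove) (use u1 ud in auto)
      have "(\<Sum>j\<le>\<delta>. f j) = f 0 + (f u + (\<Sum>j\<in>{..\<delta>}-{0}-{u}. f j))"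
        unfolding s1 s2 ..
      also have "(\<Sum>j\<in>{..\<delta>}-{0}-{u}. f j) = 0"
      proof (rule sum.neutral, intro ballI)
        fix j assume j: "j \<in> {..\<delta>}-{0}-{u}"
        show "f j = 0"
        proof (cases "j < u")
          case True
          show ?thesis
          proof (cases "j \<in> J")
            case jJ: True
            have "u - j \<notin> J" using I_set_diff[OF q2, of j t u] jJ True ud dl J_def by simp
            moreover have "1 \<le> u - j" "u - j < \<delta>" using True ud Jb[OF jJ] by auto
            ultimately have "Lambda x (\<delta> + (u - j)) = 0" by (intro Zii)
            moreover have "\<delta> + u - j = \<delta> + (u - j)" using True by simp
            ultimately show ?thesis unfolding f_def by simp
          next
            case jn: False
            have "j < \<delta>" using True ud by simp
            then have "coeff \<sigma> j * Lambda x \<delta> = - Lambda x (\<delta> + j)"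
              using less.IH[OF True] j by simp
            also have "Lambda x (\<delta> + j) = 0" using Zii jn j \<open>j < \<delta>\<close> by simp
            finally have "coeff \<sigma> j = 0" using Lnz by simp
            then show ?thesis unfolding f_def by simp
          qed
        next
          case False
          then have "j > u" using j by simp
          then have "\<delta> + u - j \<in> {1..<\<delta>}" using j u1 by auto
          then show ?thesis unfolding f_def using Zi by simp
        qed
      qed
      finally have h: "f 0 + f u = 0" using key by simp
      have h0: "f 0 = Lambda x (\<delta> + u)" unfolding f_def using c0 by simp
      have hu: "f u = coeff \<sigma> u * Lambda x \<delta>" unfolding f_def by simp
      have "coeff \<sigma> u * Lambda x \<delta> + Lambda x (\<delta> + u) = 0"
        using h unfolding h0 hu by (metis add.commute)
      then show "coeff \<sigma> u * Lambda x \<delta> = - Lambda x (\<delta> + u)"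
        by (metis eq_neg_iff_add_eq_0)
    qed
  qed
  have coefJ: "coeff \<sigma> u = - Lambda x (\<delta> + u) / Lambda x \<delta>" if "u \<in> J" for u
  proof -
    have "coeff \<sigma> u * Lambda x \<delta> = - Lambda x (\<delta> + u)" using Q Jb[OF that] by simp
    then show ?thesis using Lnz by (simp add: field_simps)
  qed
  have coefnJ: "coeff \<sigma> u = 0" if "u \<notin> J" "1 \<le> u" "u < \<delta>" for u
  proof -
    have "coeff \<sigma> u * Lambda x \<delta> = - Lambda x (\<delta> + u)" using Q that by simp
    also have "\<dots> = 0" using Zii that by simp
    finally show ?thesis using Lnz by simp
  qed
  have part3: "\<sigma> = 1 - (\<Sum>u\<in>J. smult (Lambda x (\<delta> + u) / Lambda x \<delta>) (monom 1 u))"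
  proof (rule poly_eqI)
    fix k
    have "coeff (1 - (\<Sum>u\<in>J. smult (Lambda x (\<delta> + u) / Lambda x \<delta>) (monom 1 u))) k
        = of_bool (k = 0) - (\<Sum>u\<in>J. (if u = k then Lambda x (\<delta> + u) / Lambda x \<delta> else 0))"
      by (simp add: coeff_sum coeff_monom if_distrib cong: if_cong)
    also have "(\<Sum>u\<in>J. (if u = k then Lambda x (\<delta> + u) / Lambda x \<delta> else 0))
        = (if k \<in> J then Lambda x (\<delta> + k) / Lambda x \<delta> else 0)"
      using finJ by (simp add: sum.delta')
    finally have R: "coeff (1 - (\<Sum>u\<in>J. smult (Lambda x (\<delta> + u) / Lambda x \<delta>) (monom 1 u))) k
        = of_bool (k = 0) - (if k \<in> J then Lambda x (\<delta> + k) / Lambda x \<delta> else 0)" .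
    show "coeff \<sigma> k = coeff (1 - (\<Sum>u\<in>J. smult (Lambda x (\<delta> + u) / Lambda x \<delta>) (monom 1 u))) k"
      unfolding R
    proof (cases "k = 0")
      case True
      then have "k \<notin> J" using Jb by force
      then show "coeff \<sigma> k = of_bool (k = 0) - (if k \<in> J then Lambda x (\<delta> + k) / Lambda x \<delta> else 0)"
        using True c0 by simp
    next
      case k0: False
      show "coeff \<sigma> k = of_bool (k = 0) - (if k \<in> J then Lambda x (\<delta> + k) / Lambda x \<delta> else 0)"
      proof (cases "k \<in> J")
        case True
        then show ?thesis using coefJ k0 by simp
      next
        case False
        show ?thesis
        proof (cases "k < \<delta>")
          case True
          then show ?thesis using coefnJ False k0 by simp
        next
          case False2: False
          then have "k > \<delta>" using dJ False by (cases "k = \<delta>") auto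
          then have "coeff \<sigma> k = 0" using degs by (intro coeff_eq_0) simp
          then show ?thesis using False k0 by simp
        qed
      qed
    qed
  qed
  have part2: "\<forall>u\<in>{1..<\<delta>}.
          (u \<notin> J \<longrightarrow> Lambda x (\<delta> + u) = 0 \<and> coeff \<sigma> u = 0)
        \<and> (u \<in> J \<longrightarrow> Lambda x \<delta> \<noteq> 0 \<and> coeff \<sigma> u = - Lambda x (\<delta> + u) / Lambda x \<delta>)"
  proof
    fix u assume u: "u \<in> {1..<\<delta>}"
    then have u1: "1 \<le> u" "u < \<delta>" by auto
    show "(u \<notin> J \<longrightarrow> Lambda x (\<delta> + u) = 0 \<and> coeff \<sigma> u = 0)
        \<and> (u \<in> J \<longrightarrow> Lambda x \<delta> \<noteq> 0 \<and> coeff \<sigma> u = - Lambda x (\<delta> + u) / Lambda x \<delta>)"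
    proof (intro conjI impI)
      assume "u \<notin> J"
      show "Lambda x (\<delta> + u) = 0" by (rule Zii[OF u1 \<open>u \<notin> J\<close>])
      show "coeff \<sigma> u = 0" by (rule coefnJ[OF \<open>u \<notin> J\<close> u1])
    next
      assume "u \<in> J"
      show "Lambda x \<delta> \<noteq> 0" by (rule Lnz)
      show "coeff \<sigma> u = - Lambda x (\<delta> + u) / Lambda x \<delta>" by (rule coefJ[OF \<open>u \<in> J\<close>])
    qed
  qed
  have "(\<forall>s\<in>{1..<\<delta>}. Lambda x s = 0) \<and> (\<forall>u\<in>{1..<\<delta>}.
          (u \<notin> J \<longrightarrow> Lambda x (\<delta> + u) = 0 \<and> coeff \<sigma> u = 0)
        \<and> (u \<in> J \<longrightarrow> Lambda x \<delta> \<noteq> 0 \<and> coeff \<sigma> u = - Lambda x (\<delta> + u) / Lambda x \<delta>))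
    \<and> \<sigma> = 1 - (\<Sum>u\<in>J. smult (Lambda x (\<delta> + u) / Lambda x \<delta>) (monom 1 u))"
    using Zi part2 part3 by blast
  then show ?thesis unfolding \<sigma>_def J_def t_def .
qed


end
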